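(* Let $n,m\ge1$ be integers (not necessarily distinct). Then for the Ramsey number $\mathcal{R}_{\mathcal{MAT}}$ with respect to the class $\mathcal{MAT}$ of matrix graphs, \[ \mathcal{R}_{\mathcal{MAT}}(n,m)=\mathcal{R}_{\mathcal{PO}}(n,m)=(n-1)(m-1)+1 . \]
   Context: For a commutative ring $R$ (with $1\ne0$) that is not a field and an integer $j\ge2$, let $V$ be the set of $j\times j$ matrices over $R$ whose determinant is a proper element (non-zero non-unit) of $R$. The matrix graph $\mathrm{Mat}(R)$ has vertex set $V$, distinct $A,B$ adjacent iff $\det(A)\parallel\det(B)$ or $\det(B)\parallel\det(A)$, where $a\parallel b$ means $a\mid b$ and $b\nmid a$. $\mathcal{MAT}$ is the class of all matrix graphs (over all such $R$ and $j$). $\mathcal{PO}$ is the class of partial order graphs $G_A$ of posets $(A,\le)$ (distinct vertices adjacent iff comparable). For a class $\mathcal{C}$ of graphs, $\mathcal{R}_{\mathcal{C}}(n,m)$ is the minimal $r$ such that every induced subgraph with $r$ vertices of any graph in $\mathcal{C}$ contains either $K_n$ or an independent set of $m$ vertices. *)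

theory Defs
  imports Main "Jordan_Normal_Form.Determinant"
begin

definition has_clique :: "('v \<Rightarrow> 'v \<Rightarrow> bool) \<Rightarrow> 'v set \<Rightarrow> nat \<Rightarrow> bool" where
  "has_clique E S k \<longleftrightarrow> (\<exists>K\<subseteq>S. finite K \<and> card K = k \<and> (\<forall>x\<in>K. \<forall>y\<in>K. x \<noteq> y \<longrightarrow> E x y))"

definition has_indep :: "('v \<Rightarrow> 'v \<Rightarrow> bool) \<Rightarrow> 'v set \<Rightarrow> nat \<Rightarrow> bool" where
  "has_indep E S k \<longleftrightarrow> (\<exists>K\<subseteq>S. finite K \<and> card K = k \<and> (\<forall>x\<in>K. \<forall>y\<in>K. x \<noteq> y \<longrightarrow> \<not> E x y))"

definition ramsey_good :: "'v set \<Rightarrow> ('v \<Rightarrow> 'v \<Rightarrow> bool) \<Rightarrow> nat \<Rightarrow> nat \<Rightarrow> nat \<Rightarrow> bool" where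
  "ramsey_good V E r n m \<longleftrightarrow>
     (\<forall>S\<subseteq>V. finite S \<and> card S = r \<longrightarrow> has_clique E S n \<or> has_indep E S m)"

definition proper_elem :: "'a::comm_ring_1 \<Rightarrow> bool" where
  "proper_elem x \<longleftrightarrow> x \<noteq> 0 \<and> \<not> x dvd 1"

definition sdvd :: "'a::comm_ring_1 \<Rightarrow> 'a \<Rightarrow> bool" where
  "sdvd a b \<longleftrightarrow> a dvd b \<and> \<not> b dvd a"

definition mat_vertices :: "nat \<Rightarrow> 'a::comm_ring_1 mat set" where
  "mat_vertices j = {A. A \<in> carrier_mat j j \<and> proper_elem (det A)}"

definition mat_adj :: "'a::comm_ring_1 mat \<Rightarrow> 'a mat \<Rightarrow> bool" where
  "mat_adj A B \<longleftrightarrow> A \<noteq> B \<and> (sdvd (det A) (det B) \<or> sdvd (det B) (det A))"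

definition po_adj :: "'b rel \<Rightarrow> 'b \<Rightarrow> 'b \<Rightarrow> bool" where
  "po_adj R x y \<longleftrightarrow> x \<noteq> y \<and> ((x, y) \<in> R \<or> (y, x) \<in> R)"

end

theory Submission
  imports Defs
begin

lemma finite_maximal_lt:
  assumes "finite X" "X \<noteq> {}" "\<And>x. \<not> lt x x" "\<And>x y z. lt x y \<Longrightarrow> lt y z \<Longrightarrow> lt x z"
  shows "\<exists>x\<in>X. \<forall>y\<in>X. \<not> lt x y"
  using assms(1,2)
proof (induction X rule: finite_ne_induct)
  case (singleton x) then show ?case using assms(3) by auto
next
  case (insert a X)
  then obtain b where b: "b \<in> X" "\<forall>y\<in>X. \<not> lt b y" by blast
  show ?case
  proof (cases "lt b a")
    case True
    have "\<forall>y\<in>insert a X. \<not> lt a y" using b True assms(3,4) by blast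
    then show ?thesis by blast
  next
    case False
    then show ?thesis using b by blast
  qed
qed

lemma mirsky:
  fixes lt :: "'v \<Rightarrow> 'v \<Rightarrow> bool"
  assumes irr: "\<And>x. \<not> lt x x" and tr: "\<And>x y z. lt x y \<Longrightarrow> lt y z \<Longrightarrow> lt x z"
    and m: "m \<ge> 1"
  shows "n \<ge> 1 \<Longrightarrow> finite S \<Longrightarrow> card S \<ge> (n-1)*(m-1)+1 \<Longrightarrow>
    has_clique (\<lambda>x y. x \<noteq> y \<and> (lt x y \<or> lt y x)) S n \<or> has_indep (\<lambda>x y. x \<noteq> y \<and> (lt x y \<or> lt y x)) S m"
proof (induction n arbitrary: S rule: nat_induct_at_least)
  case base
  then obtain x where "x \<in> S" by fastforce
  then have "has_clique (\<lambda>x y. x \<noteq> y \<and> (lt x y \<or> lt y x)) S 1"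
    unfolding has_clique_def by (intro exI[of _ "{x}"]) auto
  then show ?case by simp
next
  case (Suc n)
  let ?E = "\<lambda>x y. x \<noteq> y \<and> (lt x y \<or> lt y x)"
  define M where "M = {x\<in>S. \<forall>y\<in>S. \<not> lt x y}"
  show ?case
  proof (cases "card M \<ge> m")
    case True
    have fM: "finite M" using Suc.prems M_def by simp
    obtain K where K: "K \<subseteq> M" "card K = m" using True obtain_subset_with_card_n by metis
    have "has_indep ?E S m" unfolding has_indep_def
      apply (rule exI[of _ K]) using K fM M_def finite_subset by fastforce
    then show ?thesis by simp
  next
    case False
    have fM: "finite M" using Suc.prems M_def by simp
    have MS: "M \<subseteq> S" using M_def by auto
    have "card (S - M) = card S - card M" using card_Diff_subset[OF fM MS] .
    moreover have "card S \<ge> n*(m-1)+1" using Suc.prems by simp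
    moreover obtain k where k: "m = Suc k" using m by (cases m) auto
    moreover obtain l where l: "n = Suc l" using Suc.hyps by (cases n) auto
    ultimately have "card (S - M) \<ge> (n-1)*(m-1)+1" using False
      by (simp add: algebra_simps)
    then have "has_clique ?E (S - M) n \<or> has_indep ?E (S - M) m"
      using Suc.IH Suc.prems by simp
    then show ?thesis
    proof
      assume "has_indep ?E (S - M) m"
      then show ?thesis unfolding has_indep_def by blast
    next
      assume "has_clique ?E (S - M) n"
      then obtain K where K: "K \<subseteq> S - M" "finite K" "card K = n" "\<forall>x\<in>K. \<forall>y\<in>K. x \<noteq> y \<longrightarrow> ?E x y"
        unfolding has_clique_def by blast
      have "K \<noteq> {}" using K Suc.hyps by auto
      have "\<exists>x\<in>K. \<forall>y\<in>K. \<not> lt x y"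
        by (rule finite_maximal_lt[of K lt]) (use K(2) \<open>K \<noteq> {}\<close> irr tr in blast)+
      then obtain t where t: "t \<in> K" "\<forall>y\<in>K. \<not> lt t y" by blast
      have below: "\<forall>k\<in>K. k \<noteq> t \<longrightarrow> lt k t" using t K(4) by blast
      have "t \<notin> M" using t K by auto
      then obtain z where z: "z \<in> S" "lt t z" using t K M_def by auto
      define U where "U = {y\<in>S. lt t y}"
      have "finite U" "U \<noteq> {}" using U_def Suc.prems z by auto
      then have "\<exists>x\<in>U. \<forall>y\<in>U. \<not> lt x y"
        by (intro finite_maximal_lt[of U lt]) (use irr tr in blast)+
      then obtain y where y: "y \<in> U" "\<forall>w\<in>U. \<not> lt y w" by blast
      have yM: "y \<in> M" unfolding M_def using y U_def tr by auto
      have ty: "lt t y" using y U_def by auto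
      have ky: "\<forall>k\<in>K. lt k y" using below ty tr by metis
      have yK: "y \<notin> K" using ky irr by blast
      have "has_clique ?E S (Suc n)" unfolding has_clique_def
        apply (rule exI[of _ "insert y K"])
        using K yK ky yM MS by auto
      then show ?thesis by simp
    qed
  qed
qed

lemma lower_bound:
  fixes f :: "nat \<times> nat \<Rightarrow> 'v"
  assumes m: "m \<ge> 1" and n: "n \<ge> 1" and inj: "inj_on f ({..<n-1} \<times> {..<m-1})"
    and img: "f ` ({..<n-1} \<times> {..<m-1}) \<subseteq> V"
    and adj: "\<And>p q. p \<in> {..<n-1} \<times> {..<m-1} \<Longrightarrow> q \<in> {..<n-1} \<times> {..<m-1} \<Longrightarrow> p \<noteq> q \<Longrightarrow>
                 E (f p) (f q) \<longleftrightarrow> fst p \<noteq> fst q"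
    and r: "r \<le> (n-1)*(m-1)"
  shows "\<not> ramsey_good V E r n m"
proof -
  let ?G = "{..<n-1} \<times> {..<m-1}"
  have "card ?G = (n-1)*(m-1)" by (simp add: card_cartesian_product)
  then obtain T where T: "T \<subseteq> ?G" "card T = r" using r obtain_subset_with_card_n by metis
  have fT: "finite T" using T finite_subset by blast
  have injT: "inj_on f T" using inj T inj_on_subset by blast
  let ?S = "f ` T"
  have cS: "card ?S = r" using card_image[OF injT] T by simp
  have noc: "\<not> has_clique E ?S n"
  proof
    assume "has_clique E ?S n"
    then obtain K where K: "K \<subseteq> ?S" "card K = n" "\<forall>x\<in>K. \<forall>y\<in>K. x \<noteq> y \<longrightarrow> E x y"
      unfolding has_clique_def by blast
    obtain K' where K': "K' \<subseteq> T" "K = f ` K'" using K(1) subset_image_iff by metis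
    have cK': "card K' = n" using K' K card_image injT inj_on_subset by metis
    have "inj_on fst K'"
    proof (rule inj_onI)
      fix p q assume pq: "p \<in> K'" "q \<in> K'" "fst p = fst q"
      show "p = q"
      proof (rule ccontr)
        assume "p \<noteq> q"
        then have "f p \<noteq> f q" using injT pq K' inj_on_def by (metis subsetD)
        then have "E (f p) (f q)" using K K' pq by blast
        then show False using adj pq K' T \<open>p \<noteq> q\<close> by blast
      qed
    qed
    moreover have "fst ` K' \<subseteq> {..<n-1}" using K' T by auto
    ultimately have "card K' \<le> n - 1" using card_inj_on_le by (metis card_lessThan finite_lessThan)
    then show False using cK' n by simp
  qed
  have noi: "\<not> has_indep E ?S m"
  proof
    assume "has_indep E ?S m"
    then obtain K where K: "K \<subseteq> ?S" "card K = m" "\<forall>x\<in>K. \<forall>y\<in>K. x \<noteq> y \<longrightarrow> \<not> E x y"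
      unfolding has_indep_def by blast
    obtain K' where K': "K' \<subseteq> T" "K = f ` K'" using K(1) subset_image_iff by metis
    have cK': "card K' = m" using K' K card_image injT inj_on_subset by metis
    have "inj_on snd K'"
    proof (rule inj_onI)
      fix p q assume pq: "p \<in> K'" "q \<in> K'" "snd p = snd q"
      show "p = q"
      proof (rule ccontr)
        assume "p \<noteq> q"
        then have "f p \<noteq> f q" using injT pq K' inj_on_def by (metis subsetD)
        then have "\<not> E (f p) (f q)" using K K' pq by blast
        then have "fst p = fst q" using adj pq K' T \<open>p \<noteq> q\<close> by blast
        then show False using pq \<open>p \<noteq> q\<close> by (simp add: prod_eq_iff)
      qed
    qed
    moreover have "snd ` K' \<subseteq> {..<m-1}" using K' T by auto
    ultimately have "card K' \<le> m - 1" using card_inj_on_le by (metis card_lessThan finite_lessThan)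
    then show False using cK' m by simp
  qed
  have "?S \<subseteq> V" using T img by blast
  then show ?thesis unfolding ramsey_good_def
    using noc noi cS fT by blast
qed

lemma sdvd_trans: "sdvd (a::'a::comm_ring_1) b \<Longrightarrow> sdvd b c \<Longrightarrow> sdvd a c"
  unfolding sdvd_def using dvd_trans by blast

lemma sdvd_irrefl: "\<not> sdvd (a::'a::comm_ring_1) a"
  unfolding sdvd_def by blast

lemma pow2_dvd_iff: "((2::int)^x dvd 2^y) \<longleftrightarrow> x \<le> y"
proof
  assume h: "(2::int)^x dvd 2^y"
  show "x \<le> y"
  proof (rule ccontr)
    assume "\<not> x \<le> y"
    then have "(2::int)^y < 2^x" by simp
    moreover have "(2::int)^x \<le> 2^y" using zdvd_imp_le[OF h] by simp
    ultimately show False by simp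
  qed
next
  assume "x \<le> y" then show "(2::int)^x dvd 2^y" by (rule le_imp_power_dvd)
qed

definition gridmat :: "nat \<times> nat \<Rightarrow> int mat" where
  "gridmat p = mat 2 2 (\<lambda>(i,j). if i = 0 \<and> j = 0 then 2^(Suc (fst p)) else if i = 0 \<and> j = 1 then int (snd p)
     else if i = 1 \<and> j = 1 then 1 else 0)"

lemma det_gridmat: "det (gridmat p) = 2^(Suc (fst p))"
proof -
  have ut: "upper_triangular (gridmat p)"
    unfolding upper_triangular_def gridmat_def by auto
  have c: "gridmat p \<in> carrier_mat 2 2" unfolding gridmat_def by simp
  show ?thesis using det_upper_triangular[OF ut c]
    by (simp add: diag_mat_def gridmat_def numeral_2_eq_2)
qed

lemma gridmat_inj: "inj gridmat"
proof (rule injI)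
  fix p q assume h: "gridmat p = gridmat q"
  have "gridmat p $$ (0,0) = gridmat q $$ (0,0)" "gridmat p $$ (0,1) = gridmat q $$ (0,1)"
    using h by simp_all
  then have "(2::int)^(Suc (fst p)) = 2^(Suc (fst q))" "int (snd p) = int (snd q)"
    unfolding gridmat_def by simp_all
  then have "fst p = fst q" "snd p = snd q" using power_inject_exp[of "2::int"] by auto
  then show "p = q" by (simp add: prod_eq_iff)
qed

lemma proper_pow2: "proper_elem ((2::int)^Suc a)"
  unfolding proper_elem_def
proof
  show "(2::int)^Suc a \<noteq> 0" by simp
  show "\<not> (2::int)^Suc a dvd 1"
  proof
    assume "(2::int)^Suc a dvd 1"
    then have "(2::int)^Suc a \<le> 1" using zdvd_imp_le by simp
    moreover have "(1::int) < 2^Suc a" by (rule one_less_power) auto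
    ultimately show False by linarith
  qed
qed

lemma part1:
  fixes n m :: nat
  assumes "n \<ge> 1" and "m \<ge> 1"
  shows "ramsey_good (mat_vertices j :: 'a::comm_ring_1 mat set) mat_adj ((n - 1) * (m - 1) + 1) n m"
proof -
  let ?lt = "\<lambda>A B::'a mat. sdvd (det A) (det B)"
  have e: "mat_adj = (\<lambda>x y. x \<noteq> y \<and> (?lt x y \<or> ?lt y x))"
    unfolding mat_adj_def by (intro ext) simp
  show ?thesis
    unfolding ramsey_good_def
  proof (intro allI impI)
    fix S :: "'a mat set" assume "S \<subseteq> mat_vertices j" and h: "finite S \<and> card S = (n - 1) * (m - 1) + 1"
    have i: "\<And>x. \<not> ?lt x x" by (rule sdvd_irrefl)
    have t: "\<And>x y z. ?lt x y \<Longrightarrow> ?lt y z \<Longrightarrow> ?lt x z" by (rule sdvd_trans)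
    have f: "finite S" and c: "card S \<ge> (n - 1) * (m - 1) + 1" using h by auto
    have "has_clique (\<lambda>x y. x \<noteq> y \<and> (?lt x y \<or> ?lt y x)) S n \<or> has_indep (\<lambda>x y. x \<noteq> y \<and> (?lt x y \<or> ?lt y x)) S m"
      by (rule mirsky[of ?lt m n S, OF i t assms(2) assms(1) f c])
    then show "has_clique mat_adj S n \<or> has_indep mat_adj S m" by (simp only: e)
  qed
qed

lemma part3:
  fixes n m :: nat
  assumes "n \<ge> 1" and "m \<ge> 1" and po: "partial_order_on A R"
  shows "ramsey_good A (po_adj R) ((n - 1) * (m - 1) + 1) n m"
proof -
  have tr: "trans R" and an: "antisym R"
    using po unfolding partial_order_on_def preorder_on_def by auto
  let ?lt = "\<lambda>x y. (x, y) \<in> R \<and> x \<noteq> y"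
  have e: "po_adj R = (\<lambda>x y. x \<noteq> y \<and> (?lt x y \<or> ?lt y x))"
    unfolding po_adj_def by (intro ext) auto
  have t2: "\<And>x y z. ?lt x y \<Longrightarrow> ?lt y z \<Longrightarrow> ?lt x z"
    using tr an unfolding trans_def antisym_def by blast
  show ?thesis
    unfolding ramsey_good_def
  proof (intro allI impI)
    fix S assume "S \<subseteq> A" and h: "finite S \<and> card S = (n - 1) * (m - 1) + 1"
    have i: "\<And>x. \<not> ?lt x x" by simp
    have f: "finite S" and c: "card S \<ge> (n - 1) * (m - 1) + 1" using h by auto
    have "has_clique (\<lambda>x y. x \<noteq> y \<and> (?lt x y \<or> ?lt y x)) S n \<or> has_indep (\<lambda>x y. x \<noteq> y \<and> (?lt x y \<or> ?lt y x)) S m"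
      by (rule mirsky[of ?lt m n S, OF i t2 assms(2) assms(1) f c])
    then show "has_clique (po_adj R) S n \<or> has_indep (po_adj R) S m" by (simp only: e)
  qed
qed

lemma part2:
  fixes n m r :: nat
  assumes "n \<ge> 1" and "m \<ge> 1" and r: "r < (n - 1) * (m - 1) + 1"
  shows "\<not> ramsey_good (mat_vertices 2 :: int mat set) mat_adj r n m"
proof (rule lower_bound[where f = gridmat])
  show "inj_on gridmat ({..<n - 1} \<times> {..<m - 1})" using gridmat_inj inj_on_subset by blast
  have "gridmat p \<in> mat_vertices 2" for p
    unfolding mat_vertices_def using det_gridmat[of p] proper_pow2[of "fst p"]
    by (simp add: gridmat_def)
  then show "gridmat ` ({..<n - 1} \<times> {..<m - 1}) \<subseteq> mat_vertices 2" by blast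
  fix p q :: "nat \<times> nat" assume "p \<noteq> q"
  then have "gridmat p \<noteq> gridmat q" using gridmat_inj by (meson injD)
  then show "mat_adj (gridmat p) (gridmat q) = (fst p \<noteq> fst q)"
    unfolding mat_adj_def sdvd_def det_gridmat pow2_dvd_iff by auto
next
  show "m \<ge> 1" "n \<ge> 1" using assms by auto
  show "r \<le> (n - 1) * (m - 1)" using r by simp
qed

lemma part4:
  fixes n m r :: nat
  assumes "n \<ge> 1" and "m \<ge> 1" and r: "r < (n - 1) * (m - 1) + 1"
  shows "\<exists>(A::nat set) R. partial_order_on A R \<and> \<not> ramsey_good A (po_adj R) r n m"
proof -
  define R where "R = {(x::nat, y). x = y \<or> x div m < y div m}"
  have po: "partial_order_on UNIV R"
    unfolding partial_order_on_def preorder_on_def refl_on_def trans_def antisym_def R_def by auto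
  define f where "f = (\<lambda>p::nat \<times> nat. fst p * m + snd p)"
  have fdiv: "f p div m = fst p" "f p mod m = snd p" if "p \<in> {..<n - 1} \<times> {..<m - 1}" for p
    using that assms unfolding f_def by auto
  have finj: "inj_on f ({..<n - 1} \<times> {..<m - 1})"
  proof (rule inj_onI)
    fix p q assume "p \<in> {..<n - 1} \<times> {..<m - 1}" "q \<in> {..<n - 1} \<times> {..<m - 1}" "f p = f q"
    then show "p = q" using fdiv by (metis prod_eq_iff)
  qed
  have "\<not> ramsey_good (UNIV :: nat set) (po_adj R) r n m"
  proof (rule lower_bound[where f = f])
    fix p q :: "nat \<times> nat" assume pq: "p \<in> {..<n - 1} \<times> {..<m - 1}" "q \<in> {..<n - 1} \<times> {..<m - 1}" "p \<noteq> q"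
    then have "f p \<noteq> f q" using finj inj_on_def by metis
    then show "po_adj R (f p) (f q) = (fst p \<noteq> fst q)"
      unfolding po_adj_def R_def using fdiv[OF pq(1)] fdiv[OF pq(2)] by auto
  next
    show "m \<ge> 1" "n \<ge> 1" using assms by auto
    show "r \<le> (n - 1) * (m - 1)" using r by simp
    show "inj_on f ({..<n - 1} \<times> {..<m - 1})" by (rule finj)
    show "f ` ({..<n - 1} \<times> {..<m - 1}) \<subseteq> UNIV" by simp
  qed
  then show ?thesis using po by blast
qed

theorem theorem3p16:
  fixes n m :: nat
  assumes "n \<ge> 1" and "m \<ge> 1"
  shows "((\<exists>x::'a::comm_ring_1. proper_elem x) \<longrightarrow>
            (\<forall>j\<ge>2. ramsey_good (mat_vertices j :: 'a mat set) mat_adj ((n - 1) * (m - 1) + 1) n m))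
       \<and> (\<forall>r < (n - 1) * (m - 1) + 1. \<exists>j\<ge>2.
            \<not> ramsey_good (mat_vertices j :: int mat set) mat_adj r n m)
       \<and> (\<forall>(A::'b set) R. partial_order_on A R \<longrightarrow>
            ramsey_good A (po_adj R) ((n - 1) * (m - 1) + 1) n m)
       \<and> (\<forall>r < (n - 1) * (m - 1) + 1. \<exists>(A::nat set) R.
            partial_order_on A R \<and> \<not> ramsey_good A (po_adj R) r n m)"
  using part1[OF assms] part2[OF assms] part3[OF assms] part4[OF assms] by blast

end
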